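(* Let $V_1,\dots,V_n$ be i.i.d. random vectors in $\mathbb{R}^d$, $\nu=\mathbb{E}[V_i]$ and $\bar V=\frac1n\sum_{i=1}^nV_i$ ($n\ge1$). Let $H>0$ be a constant with $\|V_i-\nu\|_2\le H$ almost surely. Then for all $n\in\mathbb{N}$ and $\delta\in(0,1)$, with probability $1-\delta$, \[ \sum_{i=1}^n\|V_i-\nu\|_2^2\le\sum_{i=1}^n\|V_i-\bar V\|_2^2+2H^2\ln(2/\delta). \] *)

theory Defs
  imports "HOL-Probability.Probability"
begin

end

theory Submission
  imports Defs
begin

lemma fact_double_ge: "2 ^ k * fact k \<le> (fact (2 * k) :: real)"
proof (induction k)
  case 0 then show ?case by simp
next
  case (Suc k)
  have "(2::real) ^ Suc k * fact (Suc k) = 2 * (real k+1) * (2 ^ k * fact k)"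
    by (simp add: algebra_simps)
  also have "\<dots> \<le> (2*real k+2) * (2*real k+1) * fact (2*k)"
    using Suc by (intro mult_mono) (auto simp: algebra_simps)
  also have "\<dots> = fact (2 * Suc k)"
    by (simp add: algebra_simps)
  finally show ?case .
qed

lemma cosh_sqrt_sums:
  assumes "0 \<le> w" shows "(\<lambda>k. w ^ k / fact (2 * k)) sums cosh (sqrt w)"
proof -
  have "(\<lambda>k. (if even (2*k) then sqrt w ^ (2*k) /\<^sub>R fact (2*k) else 0)) sums cosh (sqrt w)"
    using cosh_converges[of "sqrt w"]
    by (subst sums_mono_reindex[of "\<lambda>n. 2 * n"]) (auto simp: strict_mono_def elim!: oddE)
  then show ?thesis using assms by (simp add: power_mult divide_simps)
qed

lemma cosh_le_exp_sq: "cosh (x::real) \<le> exp (x^2 / 2)"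
proof -
  have "(\<lambda>k. (x^2) ^ k / fact (2 * k)) sums cosh (sqrt (x^2))"
    by (rule cosh_sqrt_sums) simp
  then have 1: "(\<lambda>k. (x^2) ^ k / fact (2 * k)) sums cosh x" by simp
  have 2: "(\<lambda>k. (x^2/2) ^ k /\<^sub>R fact k) sums exp (x^2/2)" by (rule exp_converges)
  show ?thesis
  proof (rule sums_le[OF _ 1 2])
    fix k
    have "(x^2) ^ k / fact (2 * k) \<le> (x^2) ^ k / (2 ^ k * fact k)"
      by (intro divide_left_mono fact_double_ge) auto
    then show "(x^2) ^ k / fact (2 * k) \<le> (x^2/2) ^ k /\<^sub>R fact k"
      by (simp add: power_divide field_simps)
  qed
qed

lemma pow_convex:
  assumes "0 \<le> a" "0 \<le> b" "0 \<le> t" "t \<le> 1"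
  shows "((1-t)*a + t*b) ^ k \<le> (1-t) * a^k + t * (b::real)^k"
proof -
  have "convex_on {0..} (\<lambda>x::real. x ^ k)"
    by (rule convex_on_realI[where f'="\<lambda>x. real k * x ^ (k-1)"])
       (auto intro!: derivative_eq_intros mult_left_mono power_mono)
  then show ?thesis using assms
    by (auto simp: convex_on_def)
qed

lemma cosh_sqrt_convex:
  assumes "0 \<le> a" "0 \<le> b" "0 \<le> t" "t \<le> 1"
  shows "cosh (sqrt ((1-t)*a + t*b)) \<le> (1-t) * cosh (sqrt a) + t * cosh (sqrt b)"
proof -
  have w: "0 \<le> (1-t)*a + t*b" using assms by simp
  have s: "(\<lambda>k. (1-t) * (a ^ k / fact (2*k)) + t * (b ^ k / fact (2*k))) sums
     ((1-t) * cosh (sqrt a) + t * cosh (sqrt b))"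
    by (intro sums_add sums_mult cosh_sqrt_sums assms)
  show ?thesis
  proof (rule sums_le[OF _ cosh_sqrt_sums[OF w] s])
    fix k
    have "((1-t)*a + t*b) ^ k / fact (2*k) \<le> ((1-t) * a^k + t * b^k) / fact (2*k)"
      by (intro divide_right_mono pow_convex assms) auto
    then show "((1-t)*a + t*b) ^ k / fact (2*k) \<le> (1-t) * (a ^ k / fact (2*k)) + t * (b ^ k / fact (2*k))"
      by (simp add: field_simps)
  qed
qed

definition Gf :: "real \<Rightarrow> real \<Rightarrow> 'b::real_inner \<Rightarrow> 'b" where
  "Gf l c s = (sinh (l * norm s) * sinh (l * c) / (norm s * c)) *\<^sub>R s"

lemma key_pointwise:
  fixes s x :: "'b::real_inner"
  assumes x: "norm x \<le> c" and c: "0 < c" and l: "0 \<le> l"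
  shows "cosh (l * norm (s + x)) \<le> cosh (l * norm s) * cosh (l * c) + inner (Gf l c s) x"
proof (cases "s = 0")
  case True
  have "cosh (l * norm x) \<le> cosh (l * c)"
    using x l c by (subst cosh_real_nonneg_le_iff) (auto intro: mult_left_mono)
  then show ?thesis using True by (simp add: Gf_def)
next
  case False
  define r where "r = norm s"
  define p where "p = inner s x"
  have r: "0 < r" using False by (simp add: r_def)
  have pb: "\<bar>p\<bar> \<le> r * c"
    unfolding p_def r_def using Cauchy_Schwarz_ineq2[of s x] x
    by (meson mult_left_mono norm_ge_zero order_trans)
  have ns: "norm (s + x) ^ 2 = r^2 + 2*p + norm x ^ 2"
    unfolding r_def p_def by (simp add: power2_norm_eq_inner inner_add algebra_simps inner_commute)
  have nx2: "norm x ^ 2 \<le> c^2" using x by (simp add: power_mono)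
  define t where "t = (p + r*c) / (2*r*c)"
  have t0: "0 \<le> t" "t \<le> 1" using pb r c by (auto simp: t_def field_simps abs_le_iff)
  define a where "a = (l*(r - c))^2"
  define b where "b = (l*(r + c))^2"
  have w: "l^2 * (r^2 + 2*p + c^2) = (1-t)*a + t*b"
    using r c by (simp add: t_def a_def b_def field_simps power2_eq_square)
  have "cosh (l * norm (s + x)) = cosh (sqrt (l^2 * norm (s + x) ^ 2))"
    using l by (simp add: real_sqrt_mult)
  also have "\<dots> \<le> cosh (sqrt (l^2 * (r^2 + 2*p + c^2)))"
  proof -
    have q: "0 \<le> r^2 + 2*p + c^2"
    proof -
      have "0 \<le> (r - c)^2" by simp
      also have "\<dots> \<le> r^2 + 2*p + c^2" using pb by (simp add: power2_diff abs_le_iff mult.commute)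
      finally show ?thesis .
    qed
    have q2: "0 \<le> r^2 + 2*p + norm x ^ 2" using ns[symmetric] by simp
    show ?thesis
      using ns nx2 l q q2 by (subst cosh_real_nonneg_le_iff) (auto intro!: mult_left_mono)
  qed
  also have "\<dots> \<le> (1-t) * cosh (sqrt a) + t * cosh (sqrt b)"
    unfolding w by (rule cosh_sqrt_convex) (use t0 in \<open>auto simp: a_def b_def\<close>)
  also have "\<dots> = (1-t) * cosh (l*(r-c)) + t * cosh (l*(r+c))"
    by (simp add: a_def b_def)
  also have "\<dots> = cosh (l*r) * cosh (l*c) + (2*t - 1) * (sinh (l*r) * sinh (l*c))"
    by (simp add: algebra_simps cosh_add cosh_diff)
  also have "(2*t - 1) = p / (r * c)"
    using r c by (simp add: t_def field_simps)
  also have "cosh (l*r) * cosh (l*c) + p / (r * c) * (sinh (l*r) * sinh (l*c))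
      = cosh (l * norm s) * cosh (l * c) + inner (Gf l c s) x"
    by (simp add: Gf_def r_def p_def)
  finally show ?thesis .
qed

lemma borel_measurable_sinh_real[measurable]: "(sinh::real\<Rightarrow>real) \<in> borel_measurable borel"
  by (intro borel_measurable_continuous_onI continuous_at_imp_continuous_on ballI isCont_sinh)

lemma borel_measurable_cosh_real[measurable]: "(cosh::real\<Rightarrow>real) \<in> borel_measurable borel"
  by (intro borel_measurable_continuous_onI continuous_at_imp_continuous_on ballI isCont_cosh)

lemma Gf_measurable[measurable]: "(\<lambda>s::'b::euclidean_space. Gf l c s) \<in> borel_measurable borel"
  unfolding Gf_def by measurable

lemma Gf_norm:
  fixes s :: "'b::real_inner"
  assumes "norm s \<le> R" "0 < c" "0 \<le> l"
  shows "norm (Gf l c s) \<le> sinh (l*R) * sinh (l*c) / c"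
proof (cases "s = 0")
  case True
  have "0 \<le> R" using assms(1) norm_ge_zero order_trans by blast
  then show ?thesis using assms True by (simp add: Gf_def)
next
  case False
  have "norm (Gf l c s) = sinh (l * norm s) * sinh (l * c) / c"
    using False assms by (simp add: Gf_def abs_mult)
  also have "\<dots> \<le> sinh (l*R) * sinh (l*c) / c"
  proof -
    have "sinh (l * norm s) \<le> sinh (l*R)" using assms by (simp add: mult_left_mono)
    moreover have "0 \<le> sinh (l*c)" using assms by simp
    ultimately show ?thesis using assms by (intro divide_right_mono mult_right_mono) auto
  qed
  finally show ?thesis .
qed

lemma step:
  fixes S X :: "'a \<Rightarrow> 'b::euclidean_space"
  assumes P: "prob_space M"
    and S[measurable]: "S \<in> borel_measurable M" and X[measurable]: "X \<in> borel_measurable M"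
    and ind: "prob_space.indep_var M borel S borel X"
    and SR: "AE \<omega> in M. norm (S \<omega>) \<le> R" and Xc: "AE \<omega> in M. norm (X \<omega>) \<le> c"
    and X0: "integral\<^sup>L M X = 0" and c: "0 < c" and l: "0 \<le> l"
  shows "(\<integral>\<omega>. cosh (l * norm (S \<omega> + X \<omega>)) \<partial>M) \<le> cosh (l*c) * (\<integral>\<omega>. cosh (l * norm (S \<omega>)) \<partial>M)"
proof -
  interpret prob_space M by (rule P)
  have intX: "integrable M X" by (rule integrable_const_bound[OF Xc]) simp
  have int1: "integrable M (\<lambda>\<omega>. cosh (l * norm (S \<omega> + X \<omega>)))"
  proof (rule integrable_const_bound[where B="cosh (l*(R+c))"])
    show "AE \<omega> in M. norm (cosh (l * norm (S \<omega> + X \<omega>))) \<le> cosh (l*(R+c))"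
      using SR Xc
    proof eventually_elim
      case (elim \<omega>)
      have "norm (S \<omega> + X \<omega>) \<le> R + c" using elim norm_triangle_ineq[of "S \<omega>" "X \<omega>"] by linarith
      moreover have "0 \<le> R" using elim(1) norm_ge_zero order_trans by blast
      ultimately show ?case using l c
        by (simp, subst cosh_real_nonneg_le_iff) (auto intro: mult_left_mono)
    qed
  qed simp
  have int2: "integrable M (\<lambda>\<omega>. cosh (l * norm (S \<omega>)))"
  proof (rule integrable_const_bound[where B="cosh (l*R)"])
    show "AE \<omega> in M. norm (cosh (l * norm (S \<omega>))) \<le> cosh (l*R)"
      using SR
    proof eventually_elim
      case (elim \<omega>)
      moreover have "0 \<le> R" using elim(1) norm_ge_zero order_trans by blast
      ultimately show ?case using l c
        by (simp, subst cosh_real_nonneg_le_iff) (auto intro: mult_left_mono)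
    qed
  qed simp
  have intG: "integrable M (\<lambda>\<omega>. Gf l c (S \<omega>) \<bullet> b)" for b :: 'b
  proof (rule integrable_const_bound[where B="sinh (l*R) * sinh (l*c) / c * norm b"])
    show "AE \<omega> in M. norm (Gf l c (S \<omega>) \<bullet> b) \<le> sinh (l*R) * sinh (l*c) / c * norm b"
      using SR
    proof eventually_elim
      case (elim \<omega>)
      have "norm (Gf l c (S \<omega>) \<bullet> b) \<le> norm (Gf l c (S \<omega>)) * norm b"
        using Cauchy_Schwarz_ineq2 by simp
      also have "\<dots> \<le> sinh (l*R) * sinh (l*c) / c * norm b"
        by (intro mult_right_mono Gf_norm elim c l) simp
      finally show ?case .
    qed
  qed simp
  have intXb: "integrable M (\<lambda>\<omega>. X \<omega> \<bullet> b)" for b :: 'b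
    using intX by (rule integrable_inner_left)
  have prod0: "(\<integral>\<omega>. (Gf l c (S \<omega>) \<bullet> b) * (X \<omega> \<bullet> b) \<partial>M) = 0"
    and intprod: "integrable M (\<lambda>\<omega>. (Gf l c (S \<omega>) \<bullet> b) * (X \<omega> \<bullet> b))" for b :: 'b
  proof -
    have ind': "indep_var borel (\<lambda>\<omega>. Gf l c (S \<omega>) \<bullet> b) borel (\<lambda>\<omega>. X \<omega> \<bullet> b)"
      using indep_var_compose[OF ind, of "\<lambda>s. Gf l c s \<bullet> b" borel "\<lambda>x. x \<bullet> b" borel]
      by (simp add: comp_def)
    have "(\<integral>\<omega>. (Gf l c (S \<omega>) \<bullet> b) * (X \<omega> \<bullet> b) \<partial>M)
       = (\<integral>\<omega>. Gf l c (S \<omega>) \<bullet> b \<partial>M) * (\<integral>\<omega>. X \<omega> \<bullet> b \<partial>M)"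
      by (rule indep_var_lebesgue_integral[OF ind' intG intXb])
    also have "(\<integral>\<omega>. X \<omega> \<bullet> b \<partial>M) = 0"
      using intX X0 by simp
    finally show "(\<integral>\<omega>. (Gf l c (S \<omega>) \<bullet> b) * (X \<omega> \<bullet> b) \<partial>M) = 0" by simp
    show "integrable M (\<lambda>\<omega>. (Gf l c (S \<omega>) \<bullet> b) * (X \<omega> \<bullet> b))"
      by (rule indep_var_integrable[OF ind' intG intXb])
  qed
  have pw: "AE \<omega> in M. cosh (l * norm (S \<omega> + X \<omega>)) \<le>
      cosh (l*c) * cosh (l * norm (S \<omega>)) + (\<Sum>b\<in>Basis. (Gf l c (S \<omega>) \<bullet> b) * (X \<omega> \<bullet> b))"
    using Xc
  proof eventually_elim
    case (elim \<omega>)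
    show ?case using key_pointwise[OF elim c l, of "S \<omega>"]
      by (simp add: euclidean_inner[of "Gf l c (S \<omega>)" "X \<omega>"] mult.commute)
  qed
  have "(\<integral>\<omega>. cosh (l * norm (S \<omega> + X \<omega>)) \<partial>M) \<le>
      (\<integral>\<omega>. cosh (l*c) * cosh (l * norm (S \<omega>)) + (\<Sum>b\<in>Basis. (Gf l c (S \<omega>) \<bullet> b) * (X \<omega> \<bullet> b)) \<partial>M)"
    by (intro integral_mono_AE int1 pw Bochner_Integration.integrable_add integrable_mult_right int2
        Bochner_Integration.integrable_sum intprod)
  also have "\<dots> = cosh (l*c) * (\<integral>\<omega>. cosh (l * norm (S \<omega>)) \<partial>M)"
    apply (subst Bochner_Integration.integral_add)
      apply (auto intro!: integrable_mult_right int2 Bochner_Integration.integrable_sum intprod)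
    apply (subst Bochner_Integration.integral_sum)
     apply (auto intro: intprod simp: prod0)
    done
  finally show ?thesis .
qed

lemma decomp:
  fixes v :: "nat \<Rightarrow> 'b::real_inner" and A :: "nat set"
  assumes A: "finite A" "A \<noteq> {}"
  shows "(\<Sum>i\<in>A. (norm (v i - nu))\<^sup>2) =
    (\<Sum>i\<in>A. (norm (v i - (1 / real (card A)) *\<^sub>R (\<Sum>j\<in>A. v j)))\<^sup>2)
    + (norm (\<Sum>i\<in>A. (v i - nu)))\<^sup>2 / real (card A)"
proof -
  define N where "N = real (card A)"
  define m where "m = (1 / N) *\<^sub>R (\<Sum>j\<in>A. v j)"
  have N: "0 < N" using A by (simp add: N_def card_gt_0_iff)
  have Nm: "N *\<^sub>R m = (\<Sum>j\<in>A. v j)" using N by (simp add: m_def)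
  have sd: "(\<Sum>i\<in>A. (v i - m)) = 0"
    using Nm by (simp add: sum_subtractf N_def scaleR_conv_of_real sum_constant_scaleR)
  have sn: "(\<Sum>i\<in>A. (v i - nu)) = N *\<^sub>R (m - nu)"
    using Nm by (simp add: sum_subtractf N_def scaleR_diff_right sum_constant_scaleR)
  have each: "(norm (v i - nu))\<^sup>2 = (norm (v i - m))\<^sup>2 + 2 * inner (v i - m) (m - nu) + (norm (m - nu))\<^sup>2" for i
  proof -
    have "v i - nu = (v i - m) + (m - nu)" by simp
    then have "(norm (v i - nu))\<^sup>2 = (norm ((v i - m) + (m - nu)))\<^sup>2" by metis
    also have "\<dots> = (norm (v i - m))\<^sup>2 + 2 * inner (v i - m) (m - nu) + (norm (m - nu))\<^sup>2"
      by (simp only: power2_norm_eq_inner inner_add_left inner_add_right inner_commute[of "m - nu" "v i - m"])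
    finally show ?thesis .
  qed
  have "(\<Sum>i\<in>A. (norm (v i - nu))\<^sup>2) = (\<Sum>i\<in>A. (norm (v i - m))\<^sup>2) + 2 * inner (\<Sum>i\<in>A. (v i - m)) (m - nu) + N * (norm (m - nu))\<^sup>2"
    by (simp add: each sum.distrib inner_sum_left sum_distrib_left N_def)
  also have "\<dots> = (\<Sum>i\<in>A. (norm (v i - m))\<^sup>2) + (norm (\<Sum>i\<in>A. (v i - nu)))\<^sup>2 / N"
    using N by (simp add: sd sn power2_eq_square)
  finally show ?thesis by (simp add: m_def N_def)
qed

theorem lemma12:
  fixes M :: "'a measure" and V :: "nat \<Rightarrow> 'a \<Rightarrow> 'b::euclidean_space"
    and n :: nat and H \<delta> :: real
  assumes "prob_space M"
    and rv: "\<And>i. i \<in> {1..n} \<Longrightarrow> V i \<in> borel_measurable M"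
    and indep: "prob_space.indep_vars M (\<lambda>_. borel) V {1..n}"
    and ident: "\<And>i. i \<in> {1..n} \<Longrightarrow> distr M borel (V i) = distr M borel (V 1)"
    and n: "n \<ge> 1"
    and H: "H > 0"
    and bound: "\<And>i. i \<in> {1..n} \<Longrightarrow>
                  (AE \<omega> in M. norm (V i \<omega> - integral\<^sup>L M (V i)) \<le> H)"
    and \<delta>: "0 < \<delta>" "\<delta> < 1"
  shows "measure M {\<omega> \<in> space M.
            (\<Sum>i\<in>{1..n}. (norm (V i \<omega> - integral\<^sup>L M (V 1)))\<^sup>2)
            \<le> (\<Sum>i\<in>{1..n}. (norm (V i \<omega> - (1 / real n) *\<^sub>R (\<Sum>j\<in>{1..n}. V j \<omega>)))\<^sup>2)
               + 2 * H\<^sup>2 * ln (2 / \<delta>)} \<ge> 1 - \<delta>"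
proof -
  interpret prob_space M by fact
  define \<nu> where "\<nu> = integral\<^sup>L M (V 1)"
  define W where "W i = (if i \<in> {1..n} then V i else (\<lambda>_. 0))" for i
  have Wm[measurable]: "W i \<in> borel_measurable M" for i
    using rv by (simp add: W_def)
  have WV: "i \<in> {1..n} \<Longrightarrow> W i = V i" for i by (simp add: W_def)
  have intV: "integral\<^sup>L M (V i) = \<nu>" if i: "i \<in> {1..n}" for i
  proof -
    have "integral\<^sup>L M (V i) = integral\<^sup>L (distr M borel (V i)) (\<lambda>x. x)"
      by (rule integral_distr[symmetric]) (use rv[OF i] in auto)
    also have "\<dots> = integral\<^sup>L (distr M borel (V 1)) (\<lambda>x. x)" using ident[OF i] by simp
    also have "\<dots> = \<nu>" unfolding \<nu>_def
      by (rule integral_distr) (use rv n in auto)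
    finally show ?thesis .
  qed
  define X where "X i \<omega> = W i \<omega> - \<nu>" for i \<omega>
  have Xm[measurable]: "X i \<in> borel_measurable M" for i unfolding X_def by measurable
  have Xb: "AE \<omega> in M. norm (X i \<omega>) \<le> H" if i: "i \<in> {1..n}" for i
    using bound[OF i] by (simp add: X_def WV[OF i] intV[OF i])
  have intVi: "integrable M (V i)" if i: "i \<in> {1..n}" for i
  proof (rule integrable_const_bound[where B="H + norm \<nu>"])
    show "AE \<omega> in M. norm (V i \<omega>) \<le> H + norm \<nu>"
      using Xb[OF i]
    proof eventually_elim
      case (elim \<omega>)
      then show ?case using norm_triangle_ineq[of "V i \<omega> - \<nu>" \<nu>]
        by (simp add: X_def WV[OF i])
    qed
  qed (use rv[OF i] in auto)
  have X0: "integral\<^sup>L M (X i) = 0" if i: "i \<in> {1..n}" for i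
  proof -
    have "integral\<^sup>L M (X i) = integral\<^sup>L M (V i) - integral\<^sup>L M (\<lambda>_. \<nu>)"
      unfolding X_def WV[OF i] by (rule Bochner_Integration.integral_diff) (auto intro: intVi[OF i])
    then show ?thesis using intV[OF i] by (simp add: prob_space)
  qed
  define S where "S k \<omega> = (\<Sum>i\<in>{1..k}. X i \<omega>)" for k \<omega>
  have Sm[measurable]: "S k \<in> borel_measurable M" for k unfolding S_def by measurable
  have indk: "indep_var borel (S k) borel (X (Suc k))" if k: "Suc k \<le> n" for k
  proof -
    have "indep_vars (\<lambda>j. PiM (case_bool {1..k} {Suc k} j) (\<lambda>_. borel))
        (\<lambda>j \<omega>. restrict (\<lambda>i. V i \<omega>) (case_bool {1..k} {Suc k} j)) UNIV"
      by (rule indep_vars_restrict[OF indep]) (use k in \<open>auto split: bool.split simp: disjoint_family_on_def\<close>)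
    moreover have "(\<lambda>j. PiM (case_bool {1..k} {Suc k} j) (\<lambda>_. borel)) =
        case_bool (PiM {1..k} (\<lambda>_. borel)) (PiM {Suc k} (\<lambda>_. borel))"
      by (rule ext) (simp split: bool.split)
    moreover have "(\<lambda>j \<omega>. restrict (\<lambda>i. V i \<omega>) (case_bool {1..k} {Suc k} j)) =
        case_bool (\<lambda>\<omega>. restrict (\<lambda>i. V i \<omega>) {1..k}) (\<lambda>\<omega>. restrict (\<lambda>i. V i \<omega>) {Suc k})"
      by (rule ext) (simp split: bool.split)
    ultimately have "indep_var (PiM {1..k} (\<lambda>_. borel)) (\<lambda>\<omega>. restrict (\<lambda>i. V i \<omega>) {1..k})
        (PiM {Suc k} (\<lambda>_. borel)) (\<lambda>\<omega>. restrict (\<lambda>i. V i \<omega>) {Suc k})"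
      unfolding indep_var_def by metis
    from indep_var_compose[OF this, of "\<lambda>f. \<Sum>i\<in>{1..k}. f i - \<nu>" borel "\<lambda>f. f (Suc k) - \<nu>" borel]
    have "indep_var borel (\<lambda>\<omega>. \<Sum>i\<in>{1..k}. V i \<omega> - \<nu>) borel (\<lambda>\<omega>. V (Suc k) \<omega> - \<nu>)"
      by (simp add: comp_def)
    moreover have "(\<lambda>\<omega>. \<Sum>i\<in>{1..k}. V i \<omega> - \<nu>) = S k"
      using k by (auto simp: S_def X_def WV intro!: sum.cong)
    moreover have "(\<lambda>\<omega>. V (Suc k) \<omega> - \<nu>) = X (Suc k)"
      using k by (auto simp: X_def WV)
    ultimately show ?thesis by simp
  qed
  have claim: "(AE \<omega> in M. norm (S k \<omega>) \<le> real k * H) \<and>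
      (\<integral>\<omega>. cosh (l * norm (S k \<omega>)) \<partial>M) \<le> cosh (l * H) ^ k"
    if "k \<le> n" "0 \<le> l" for k l
    using that(1)
  proof (induction k)
    case 0
    then show ?case by (simp add: S_def prob_space)
  next
    case (Suc k)
    then have IH: "AE \<omega> in M. norm (S k \<omega>) \<le> real k * H"
      "(\<integral>\<omega>. cosh (l * norm (S k \<omega>)) \<partial>M) \<le> cosh (l * H) ^ k" by auto
    have k1: "Suc k \<in> {1..n}" using Suc.prems by simp
    have SS: "S (Suc k) \<omega> = S k \<omega> + X (Suc k) \<omega>" for \<omega> by (simp add: S_def)
    have "AE \<omega> in M. norm (S (Suc k) \<omega>) \<le> real (Suc k) * H"
      using IH(1) Xb[OF k1]
    proof eventually_elim
      case (elim \<omega>)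
      then show ?case using norm_triangle_ineq[of "S k \<omega>" "X (Suc k) \<omega>"]
        by (simp add: SS algebra_simps)
    qed
    moreover have "(\<integral>\<omega>. cosh (l * norm (S (Suc k) \<omega>)) \<partial>M) \<le> cosh (l * H) ^ Suc k"
    proof -
      have "(\<integral>\<omega>. cosh (l * norm (S (Suc k) \<omega>)) \<partial>M) \<le> cosh (l*H) * (\<integral>\<omega>. cosh (l * norm (S k \<omega>)) \<partial>M)"
        unfolding SS
        by (rule step[OF \<open>prob_space M\<close> Sm Xm indk[OF Suc.prems] IH(1) Xb[OF k1] X0[OF k1] H that(2)])
      also have "\<dots> \<le> cosh (l*H) * cosh (l * H) ^ k"
        by (intro mult_left_mono IH(2)) simp
      finally show ?thesis by simp
    qed
    ultimately show ?case by blast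
  qed
  define L where "L = ln (2 / \<delta>)"
  define t where "t = sqrt (2 * real n * H^2 * L)"
  define l where "l = t / (real n * H^2)"
  have nr: "0 < real n" using n by simp
  have L: "0 < L" using \<delta> by (simp add: L_def)
  have t: "0 < t" using nr H L by (simp add: t_def)
  have l: "0 < l" using t nr H by (simp add: l_def)
  have t2: "t^2 = 2 * real n * H^2 * L" using nr H L by (simp add: t_def)
  have AEn: "AE \<omega> in M. norm (S n \<omega>) \<le> real n * H" using claim[of n l] l by simp
  have intS: "integrable M (\<lambda>\<omega>. cosh (l * norm (S n \<omega>)))"
  proof (rule integrable_const_bound[where B="cosh (l * (real n * H))"])
    show "AE \<omega> in M. norm (cosh (l * norm (S n \<omega>))) \<le> cosh (l * (real n * H))"
      using AEn
    proof eventually_elim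
      case (elim \<omega>)
      then show ?case using H nr l
        by (simp, subst cosh_real_nonneg_le_iff) (auto intro: mult_left_mono)
    qed
  qed simp
  have E: "(\<integral>\<omega>. cosh (l * norm (S n \<omega>)) \<partial>M) \<le> exp (real n * (l*H)^2 / 2)"
  proof -
    have "(\<integral>\<omega>. cosh (l * norm (S n \<omega>)) \<partial>M) \<le> cosh (l * H) ^ n"
      using claim[of n l] l by simp
    also have "\<dots> \<le> exp ((l*H)^2/2) ^ n"
      by (intro power_mono cosh_le_exp_sq) (simp add: less_imp_le)
    also have "\<dots> = exp (real n * (l*H)^2 / 2)"
      by (simp add: exp_of_nat_mult[symmetric])
    finally show ?thesis .
  qed
  have ch: "exp (l*t) / 2 \<le> cosh (l*t)"
    by (simp add: cosh_def)
  have bad: "measure M {\<omega> \<in> space M. t < norm (S n \<omega>)} \<le> \<delta>"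
  proof -
    have "measure M {\<omega> \<in> space M. t < norm (S n \<omega>)} \<le> measure M {\<omega> \<in> space M. cosh (l*t) \<le> cosh (l * norm (S n \<omega>))}"
      using l t
      by (intro finite_measure_mono) (auto simp: cosh_real_nonneg_le_iff)
    also have "\<dots> \<le> (\<integral>\<omega>. cosh (l * norm (S n \<omega>)) \<partial>M) / cosh (l*t)"
      by (rule integral_Markov_inequality_measure[OF intS, where A="space M"]) auto
    also have "\<dots> \<le> exp (real n * (l*H)^2 / 2) / (exp (l*t) / 2)"
      using E ch by (intro frac_le) (auto intro: less_imp_le)
    also have "\<dots> = 2 * exp (real n * (l*H)^2 / 2 - l*t)"
      by (simp add: exp_diff)
    also have "real n * (l*H)^2 / 2 - l*t = - L"
    proof -
      have "real n * (l*H)^2 / 2 - l*t = t^2 / (2 * real n * H^2) - t^2 / (real n * H^2)"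
        using nr H by (simp add: l_def field_simps power2_eq_square)
      also have "\<dots> = - L" using nr H by (simp add: t2 field_simps)
      finally show ?thesis .
    qed
    also have "2 * exp (- L) = \<delta>"
      using \<delta> by (simp add: L_def exp_minus)
    finally show ?thesis .
  qed
  have sub: "space M - {\<omega> \<in> space M. t < norm (S n \<omega>)} \<subseteq> {\<omega> \<in> space M.
            (\<Sum>i\<in>{1..n}. (norm (V i \<omega> - integral\<^sup>L M (V 1)))\<^sup>2)
            \<le> (\<Sum>i\<in>{1..n}. (norm (V i \<omega> - (1 / real n) *\<^sub>R (\<Sum>j\<in>{1..n}. V j \<omega>)))\<^sup>2)
               + 2 * H\<^sup>2 * ln (2 / \<delta>)}"
  proof safe
    fix \<omega> assume \<omega>: "\<omega> \<in> space M" "\<not> t < norm (S n \<omega>)"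
    have Sn: "S n \<omega> = (\<Sum>i\<in>{1..n}. V i \<omega> - \<nu>)"
      by (auto simp: S_def X_def WV intro!: sum.cong)
    have "(norm (S n \<omega>))^2 \<le> t^2" using \<omega> by (intro power_mono) auto
    then have "(norm (S n \<omega>))^2 / real n \<le> 2 * H^2 * L"
      using nr by (simp add: t2 field_simps)
    then show "(\<Sum>i\<in>{1..n}. (norm (V i \<omega> - integral\<^sup>L M (V 1)))\<^sup>2)
            \<le> (\<Sum>i\<in>{1..n}. (norm (V i \<omega> - (1 / real n) *\<^sub>R (\<Sum>j\<in>{1..n}. V j \<omega>)))\<^sup>2)
               + 2 * H\<^sup>2 * ln (2 / \<delta>)"
      unfolding \<nu>_def[symmetric] L_def[symmetric]
    proof -
      have D: "(\<Sum>i\<in>{1..n}. (norm (V i \<omega> - \<nu>))\<^sup>2) =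
         (\<Sum>i\<in>{1..n}. (norm (V i \<omega> - (1 / real n) *\<^sub>R (\<Sum>j\<in>{1..n}. V j \<omega>)))\<^sup>2)
         + (norm (S n \<omega>))\<^sup>2 / real n"
        using decomp[of "{1..n}" "\<lambda>i. V i \<omega>" \<nu>] n by (simp add: Sn)
      show "(\<Sum>i\<in>{1..n}. (norm (V i \<omega> - \<nu>))\<^sup>2)
        \<le> (\<Sum>i\<in>{1..n}. (norm (V i \<omega> - (1 / real n) *\<^sub>R (\<Sum>j\<in>{1..n}. V j \<omega>)))\<^sup>2) + 2 * H\<^sup>2 * L"
        using D \<open>(norm (S n \<omega>))^2 / real n \<le> 2 * H^2 * L\<close> by linarith
    qed
  qed
  have setm: "{\<omega> \<in> space M.
            (\<Sum>i\<in>{1..n}. (norm (V i \<omega> - integral\<^sup>L M (V 1)))\<^sup>2)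
            \<le> (\<Sum>i\<in>{1..n}. (norm (V i \<omega> - (1 / real n) *\<^sub>R (\<Sum>j\<in>{1..n}. V j \<omega>)))\<^sup>2)
               + 2 * H\<^sup>2 * ln (2 / \<delta>)} = {\<omega> \<in> space M.
            (\<Sum>i\<in>{1..n}. (norm (W i \<omega> - integral\<^sup>L M (V 1)))\<^sup>2)
            \<le> (\<Sum>i\<in>{1..n}. (norm (W i \<omega> - (1 / real n) *\<^sub>R (\<Sum>j\<in>{1..n}. W j \<omega>)))\<^sup>2)
               + 2 * H\<^sup>2 * ln (2 / \<delta>)}"
  proof -
    have s1: "(\<Sum>j\<in>{1..n}. W j \<omega>) = (\<Sum>j\<in>{1..n}. V j \<omega>)" for \<omega>
      by (rule sum.cong) (auto simp: WV)
    have s2: "(\<Sum>i\<in>{1..n}. (norm (W i \<omega> - c))\<^sup>2) = (\<Sum>i\<in>{1..n}. (norm (V i \<omega> - c))\<^sup>2)" for \<omega> c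
      by (rule sum.cong) (auto simp: WV)
    show ?thesis by (simp only: s1 s2)
  qed
  have "1 - \<delta> \<le> 1 - measure M {\<omega> \<in> space M. t < norm (S n \<omega>)}" using bad by simp
  also have "\<dots> = measure M (space M - {\<omega> \<in> space M. t < norm (S n \<omega>)})"
    by (rule prob_compl[symmetric]) measurable
  also have "\<dots> \<le> measure M {\<omega> \<in> space M.
            (\<Sum>i\<in>{1..n}. (norm (V i \<omega> - integral\<^sup>L M (V 1)))\<^sup>2)
            \<le> (\<Sum>i\<in>{1..n}. (norm (V i \<omega> - (1 / real n) *\<^sub>R (\<Sum>j\<in>{1..n}. V j \<omega>)))\<^sup>2)
               + 2 * H\<^sup>2 * ln (2 / \<delta>)}"
    by (rule finite_measure_mono[OF sub]) (unfold setm, measurable)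
  finally show ?thesis .
qed

end
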